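(* Let $M=(W,\bm{\Box},V)$ be a transitive, monotonic and regular neighborhood model, $\Sigma$ a set of formulas closed under subformulas, and $M^{T}_f$ the transitive filtration of $M$ through $\Sigma$. Then $M^{T\bullet}_f=(W_f,\bm{\Box}^{T\bullet}_f,V_f)$ is a filtration of $M$ through $\Sigma$, i.e. $\bm{\Box}^{T\bullet}_f\widetilde{|\varphi|}_M=\widetilde{|\Box\varphi|}_M$ for every formula $\Box\varphi\in\Sigma$.
   Context: A neighborhood model is $M=(W,\bm{\Box},V)$ with $W\neq\varnothing$, $\bm{\Box}:\mathcal P(W)\to\mathcal P(W)$, $V:Var\to\mathcal P(W)$; truth sets: $|p|_M=V(p)$, $|\neg\varphi|_M=W\setminus|\varphi|_M$, $|\varphi\wedge\psi|_M=|\varphi|_M\cap|\psi|_M$, $|\Box\varphi|_M=\bm{\Box}|\varphi|_M$. $M$ is transitive if $\bm{\Box}X\subseteq\bm{\Box}\bm{\Box}X$, monotonic if $X\subseteq Y\Rightarrow\bm{\Box}X\subseteq\bm{\Box}Y$, regular if $\bm{\Box}X\cap\bm{\Box}Y\subseteq\bm{\Box}(X\cap Y)$, for all $X,Y\subseteq W$. For $\Sigma$ closed under subformulas, $w\sim v$ iff $w,v$ satisfy the same formulas of $\Sigma$; $\widetilde w$ is the class of $w$, $W_f=\{\widetilde w:w\in W\}$, $\widetilde X=\{\widetilde w:w\in X\}$, $V_f(p)=\widetilde{|p|}_M$. A filtration of $M$ through $\Sigma$ is a model $(W_f,\bm{\Box}_f,V_f)$ with $\bm{\Box}_f\widetilde{|\varphi|}_M=\widetilde{|\Box\varphi|}_M$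 whenever $\Box\varphi\in\Sigma$. The minimal filtration has $\bm{\Box}^{-}_fX=\widetilde{|\Box\varphi|}_M$ if $X=\widetilde{|\varphi|}_M$ for some formula $\Box\varphi\in\Sigma$, and $\varnothing$ otherwise. For a function $\bm{\Box}':\mathcal P(U)\to\mathcal P(U)$: $\widehat{\bm{\Box}'}X=X$ if $X=\bm{\Box}'Y$ for some $Y$, else $\varnothing$; $\bm{\Box}'^{\#}X=\bigcup\{\bm{\Box}'Y:Y\subseteq X\}$; $\bm{\Box}'^{*}X=\bigcup\{\bm{\Box}'X_1\cap\dots\cap\bm{\Box}'X_n:n\ge1,\ X=X_1\cap\dots\cap X_n\}$; $\bm{\Box}'^{\bullet}=\bm{\Box}'^{*\#}$. The transitive filtration has $\bm{\Box}^{T}_fX=\bm{\Box}^{-}_fX\cup\widehat{\bm{\Box}^{-}_f}X$, and $\bm{\Box}^{T\bullet}_f=(\bm{\Box}^{T}_f)^{\bullet}$. *)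

theory Defs
  imports Main
begin

datatype 'v fm = Var 'v | Neg "'v fm" | Conj "'v fm" "'v fm" | Box "'v fm"

fun subfms :: "'v fm \<Rightarrow> 'v fm set" where
  "subfms (Var p) = {Var p}"
| "subfms (Neg a) = insert (Neg a) (subfms a)"
| "subfms (Conj a b) = insert (Conj a b) (subfms a \<union> subfms b)"
| "subfms (Box a) = insert (Box a) (subfms a)"

definition sub_closed :: "'v fm set \<Rightarrow> bool" where
  "sub_closed \<Sigma> \<longleftrightarrow> (\<forall>\<phi>\<in>\<Sigma>. subfms \<phi> \<subseteq> \<Sigma>)"

definition nbhd_model :: "'w set \<Rightarrow> ('w set \<Rightarrow> 'w set) \<Rightarrow> ('v \<Rightarrow> 'w set) \<Rightarrow> bool" where
  "nbhd_model W N V \<longleftrightarrow> W \<noteq> {} \<and> (\<forall>X. X \<subseteq> W \<longrightarrow> N X \<subseteq> W) \<and> (\<forall>p. V p \<subseteq> W)"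

fun tset :: "'w set \<Rightarrow> ('w set \<Rightarrow> 'w set) \<Rightarrow> ('v \<Rightarrow> 'w set) \<Rightarrow> 'v fm \<Rightarrow> 'w set" where
  "tset W N V (Var p) = V p"
| "tset W N V (Neg a) = W - tset W N V a"
| "tset W N V (Conj a b) = tset W N V a \<inter> tset W N V b"
| "tset W N V (Box a) = N (tset W N V a)"

definition transitive_nb :: "'w set \<Rightarrow> ('w set \<Rightarrow> 'w set) \<Rightarrow> bool" where
  "transitive_nb W N \<longleftrightarrow> (\<forall>X. X \<subseteq> W \<longrightarrow> N X \<subseteq> N (N X))"

definition monotonic_nb :: "'w set \<Rightarrow> ('w set \<Rightarrow> 'w set) \<Rightarrow> bool" where
  "monotonic_nb W N \<longleftrightarrow> (\<forall>X Y. X \<subseteq> Y \<and> Y \<subseteq> W \<longrightarrow> N X \<subseteq> N Y)"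

definition regular_nb :: "'w set \<Rightarrow> ('w set \<Rightarrow> 'w set) \<Rightarrow> bool" where
  "regular_nb W N \<longleftrightarrow> (\<forall>X Y. X \<subseteq> W \<and> Y \<subseteq> W \<longrightarrow> N X \<inter> N Y \<subseteq> N (X \<inter> Y))"

definition cls :: "'w set \<Rightarrow> ('w set \<Rightarrow> 'w set) \<Rightarrow> ('v \<Rightarrow> 'w set) \<Rightarrow> 'v fm set \<Rightarrow> 'w \<Rightarrow> 'w set" where
  "cls W N V \<Sigma> w = {v \<in> W. \<forall>\<phi>\<in>\<Sigma>. (w \<in> tset W N V \<phi> \<longleftrightarrow> v \<in> tset W N V \<phi>)}"

definition tl_set :: "'w set \<Rightarrow> ('w set \<Rightarrow> 'w set) \<Rightarrow> ('v \<Rightarrow> 'w set) \<Rightarrow> 'v fm set \<Rightarrow> 'w set \<Rightarrow> 'w set set" where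
  "tl_set W N V \<Sigma> X = cls W N V \<Sigma> ` X"

definition Wf :: "'w set \<Rightarrow> ('w set \<Rightarrow> 'w set) \<Rightarrow> ('v \<Rightarrow> 'w set) \<Rightarrow> 'v fm set \<Rightarrow> 'w set set" where
  "Wf W N V \<Sigma> = tl_set W N V \<Sigma> W"

definition Vf :: "'w set \<Rightarrow> ('w set \<Rightarrow> 'w set) \<Rightarrow> ('v \<Rightarrow> 'w set) \<Rightarrow> 'v fm set \<Rightarrow> 'v \<Rightarrow> 'w set set" where
  "Vf W N V \<Sigma> p = tl_set W N V \<Sigma> (V p)"

definition is_filtration :: "'w set \<Rightarrow> ('w set \<Rightarrow> 'w set) \<Rightarrow> ('v \<Rightarrow> 'w set) \<Rightarrow> 'v fm set
    \<Rightarrow> ('w set set \<Rightarrow> 'w set set) \<Rightarrow> bool" where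
  "is_filtration W N V \<Sigma> Bf \<longleftrightarrow>
     nbhd_model (Wf W N V \<Sigma>) Bf (Vf W N V \<Sigma>) \<and>
     (\<forall>\<phi>. Box \<phi> \<in> \<Sigma> \<longrightarrow>
        Bf (tl_set W N V \<Sigma> (tset W N V \<phi>)) = tl_set W N V \<Sigma> (tset W N V (Box \<phi>)))"

text \<open>Minimal filtration (well defined since \<Sigma> is closed under subformulas; written as
  the union over all witnesses, which is a single set in that case).\<close>
definition box_min :: "'w set \<Rightarrow> ('w set \<Rightarrow> 'w set) \<Rightarrow> ('v \<Rightarrow> 'w set) \<Rightarrow> 'v fm set
    \<Rightarrow> 'w set set \<Rightarrow> 'w set set" where
  "box_min W N V \<Sigma> X = \<Union>{tl_set W N V \<Sigma> (tset W N V (Box \<phi>)) | \<phi>.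
       Box \<phi> \<in> \<Sigma> \<and> X = tl_set W N V \<Sigma> (tset W N V \<phi>)}"

definition hat_op :: "'a set \<Rightarrow> ('a set \<Rightarrow> 'a set) \<Rightarrow> 'a set \<Rightarrow> 'a set" where
  "hat_op U B X = (if \<exists>Y. Y \<subseteq> U \<and> X = B Y then X else {})"

definition sharp_op :: "'a set \<Rightarrow> ('a set \<Rightarrow> 'a set) \<Rightarrow> 'a set \<Rightarrow> 'a set" where
  "sharp_op U B X = \<Union>{B Y | Y. Y \<subseteq> X}"

definition star_op :: "'a set \<Rightarrow> ('a set \<Rightarrow> 'a set) \<Rightarrow> 'a set \<Rightarrow> 'a set" where
  "star_op U B X = \<Union>{\<Inter>(B ` set Xs) | Xs. Xs \<noteq> [] \<and> set Xs \<subseteq> Pow U \<and> X = \<Inter>(set Xs)}"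

definition bullet_op :: "'a set \<Rightarrow> ('a set \<Rightarrow> 'a set) \<Rightarrow> 'a set \<Rightarrow> 'a set" where
  "bullet_op U B = sharp_op U (star_op U B)"

definition box_T :: "'w set \<Rightarrow> ('w set \<Rightarrow> 'w set) \<Rightarrow> ('v \<Rightarrow> 'w set) \<Rightarrow> 'v fm set
    \<Rightarrow> 'w set set \<Rightarrow> 'w set set" where
  "box_T W N V \<Sigma> X = box_min W N V \<Sigma> X \<union> hat_op (Wf W N V \<Sigma>) (box_min W N V \<Sigma>) X"

definition box_T_bullet :: "'w set \<Rightarrow> ('w set \<Rightarrow> 'w set) \<Rightarrow> ('v \<Rightarrow> 'w set) \<Rightarrow> 'v fm set
    \<Rightarrow> 'w set set \<Rightarrow> 'w set set" where
  "box_T_bullet W N V \<Sigma> = bullet_op (Wf W N V \<Sigma>) (box_T W N V \<Sigma>)"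

end

theory Submission
  imports Defs
begin

lemma tset_sub: "nbhd_model W N V \<Longrightarrow> tset W N V \<phi> \<subseteq> W"
  by (induction \<phi>) (auto simp: nbhd_model_def)

lemma self_subfms: "\<phi> \<in> subfms \<phi>"
  by (cases \<phi>) auto

lemma box_closed: "sub_closed \<Sigma> \<Longrightarrow> Box \<psi> \<in> \<Sigma> \<Longrightarrow> \<psi> \<in> \<Sigma>"
  unfolding sub_closed_def using self_subfms[of \<psi>] by fastforce

lemma cls_self: "w \<in> W \<Longrightarrow> w \<in> cls W N V \<Sigma> w"
  by (simp add: cls_def)

lemma sat:
  assumes "\<theta> \<in> \<Sigma>" "w \<in> W"
  shows "(cls W N V \<Sigma> w \<in> tl_set W N V \<Sigma> (tset W N V \<theta>)) = (w \<in> tset W N V \<theta>)"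
proof
  assume "cls W N V \<Sigma> w \<in> tl_set W N V \<Sigma> (tset W N V \<theta>)"
  then obtain v where v: "v \<in> tset W N V \<theta>" "cls W N V \<Sigma> w = cls W N V \<Sigma> v"
    by (auto simp: tl_set_def)
  have "w \<in> cls W N V \<Sigma> v" using v(2) cls_self[OF assms(2)] by metis
  then show "w \<in> tset W N V \<theta>" using v(1) assms(1) by (auto simp: cls_def)
qed (auto simp: tl_set_def)

lemma box_min_sub: "nbhd_model W N V \<Longrightarrow> box_min W N V \<Sigma> X \<subseteq> Wf W N V \<Sigma>"
proof
  fix c assume m: "nbhd_model W N V" and "c \<in> box_min W N V \<Sigma> X"
  then obtain \<phi> where "c \<in> tl_set W N V \<Sigma> (tset W N V (Box \<phi>))"
    unfolding box_min_def by blast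
  then obtain w where "w \<in> tset W N V (Box \<phi>)" "c = cls W N V \<Sigma> w"
    unfolding tl_set_def by blast
  moreover have "tset W N V (Box \<phi>) \<subseteq> W" by (rule tset_sub[OF m])
  ultimately show "c \<in> Wf W N V \<Sigma>" unfolding Wf_def tl_set_def by blast
qed

lemma box_T_sub: "nbhd_model W N V \<Longrightarrow> box_T W N V \<Sigma> X \<subseteq> Wf W N V \<Sigma>"
proof
  fix c assume m: "nbhd_model W N V" and c: "c \<in> box_T W N V \<Sigma> X"
  show "c \<in> Wf W N V \<Sigma>"
  proof (cases "c \<in> box_min W N V \<Sigma> X")
    case True then show ?thesis using box_min_sub[OF m] by blast
  next
    case False
    then have "c \<in> hat_op (Wf W N V \<Sigma>) (box_min W N V \<Sigma>) X" using c unfolding box_T_def by blast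
    then obtain Y where "X = box_min W N V \<Sigma> Y" "c \<in> X" unfolding hat_op_def
      by (auto split: if_splits)
    then show ?thesis using box_min_sub[OF m] by blast
  qed
qed

lemma bullet_sub: "nbhd_model W N V \<Longrightarrow> box_T_bullet W N V \<Sigma> X \<subseteq> Wf W N V \<Sigma>"
proof -
  assume m: "nbhd_model W N V"
  have "star_op (Wf W N V \<Sigma>) (box_T W N V \<Sigma>) Y \<subseteq> Wf W N V \<Sigma>" for Y
  proof
    fix c assume "c \<in> star_op (Wf W N V \<Sigma>) (box_T W N V \<Sigma>) Y"
    then obtain Xs where "Xs \<noteq> []" "c \<in> \<Inter>(box_T W N V \<Sigma> ` set Xs)"
      unfolding star_op_def by blast
    then have "c \<in> box_T W N V \<Sigma> (hd Xs)" by simp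
    then show "c \<in> Wf W N V \<Sigma>" using box_T_sub[OF m] by blast
  qed
  then show ?thesis unfolding box_T_bullet_def bullet_op_def sharp_op_def by blast
qed

lemma reg_list:
  assumes "regular_nb W N" "Ss \<noteq> []" "\<forall>S\<in>set Ss. S \<subseteq> W \<and> w \<in> N S"
  shows "w \<in> N (\<Inter>(set Ss))"
  using assms(2,3)
proof (induction Ss)
  case Nil then show ?case by simp
next
  case (Cons a Ss)
  show ?case
  proof (cases "Ss = []")
    case True then show ?thesis using Cons by simp
  next
    case False
    then have "w \<in> N (\<Inter>(set Ss))" using Cons by simp
    moreover have "\<Inter>(set Ss) \<subseteq> W" using Cons.prems False by (auto simp: neq_Nil_conv)
    ultimately show ?thesis using Cons.prems assms(1) unfolding regular_nb_def by auto
  qed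
qed

lemma part1: assumes m: "nbhd_model W N V"
  shows "nbhd_model (Wf W N V \<Sigma>) (box_T_bullet W N V \<Sigma>) (Vf W N V \<Sigma>)"
proof -
  have "Wf W N V \<Sigma> \<noteq> {}" using m unfolding nbhd_model_def Wf_def tl_set_def by blast
  moreover have "Vf W N V \<Sigma> p \<subseteq> Wf W N V \<Sigma>" for p
    using m unfolding nbhd_model_def Wf_def Vf_def tl_set_def by blast
  ultimately show ?thesis using bullet_sub[OF m] unfolding nbhd_model_def by blast
qed

lemma part2:
  fixes W :: "'w set" and N :: "'w set \<Rightarrow> 'w set" and V :: "'v \<Rightarrow> 'w set"
    and \<Sigma> :: "'v fm set"
  assumes "nbhd_model W N V"
    and "transitive_nb W N" and "monotonic_nb W N" and "regular_nb W N"
    and "sub_closed \<Sigma>" and bp: "Box \<phi> \<in> \<Sigma>"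
  shows "box_T_bullet W N V \<Sigma> (tl_set W N V \<Sigma> (tset W N V \<phi>)) = tl_set W N V \<Sigma> (tset W N V (Box \<phi>))"
proof -
  note m = assms(1)
  let ?cl = "cls W N V \<Sigma>"
  let ?T = "tset W N V"
  let ?tl = "tl_set W N V \<Sigma>"
  let ?B = "box_T W N V \<Sigma>"
  define P where "P X = {u \<in> W. ?cl u \<in> X}" for X
  have PT: "P (?tl (?T \<theta>)) = ?T \<theta>" if "\<theta> \<in> \<Sigma>" for \<theta>
  proof
    show "P (?tl (?T \<theta>)) \<subseteq> ?T \<theta>" unfolding P_def using sat[where W=W and N=N and V=V, OF that] by auto
    show "?T \<theta> \<subseteq> P (?tl (?T \<theta>))" unfolding P_def using sat[where W=W and N=N and V=V, OF that] tset_sub[OF m, of \<theta>] by auto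
  qed
  have Psub: "P X \<subseteq> W" for X unfolding P_def by blast
  have mono: "N S \<subseteq> N S'" if "S \<subseteq> S'" "S' \<subseteq> W" for S S'
    using assms(3) that unfolding monotonic_nb_def by blast
  show ?thesis
proof
  have ph: "\<phi> \<in> \<Sigma>" using box_closed[OF assms(5) bp] .
  show "?tl (?T (Box \<phi>)) \<subseteq> box_T_bullet W N V \<Sigma> (?tl (?T \<phi>))"
  proof
    fix c assume c: "c \<in> ?tl (?T (Box \<phi>))"
    have "?tl (?T (Box \<phi>)) \<subseteq> box_min W N V \<Sigma> (?tl (?T \<phi>))"
      unfolding box_min_def by (rule Union_upper) (use bp in blast)
    then have "c \<in> ?B (?tl (?T \<phi>))" using c unfolding box_T_def by blast
    moreover have "?tl (?T \<phi>) \<subseteq> Wf W N V \<Sigma>"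
      using tset_sub[OF m] unfolding Wf_def tl_set_def by blast
    ultimately have "c \<in> star_op (Wf W N V \<Sigma>) ?B (?tl (?T \<phi>))"
      unfolding star_op_def
    proof (intro UnionI[of "\<Inter>(?B ` set [?tl (?T \<phi>)])"] CollectI)
      show "\<exists>Xs. \<Inter>(?B ` set [?tl (?T \<phi>)]) = \<Inter>(?B ` set Xs) \<and> Xs \<noteq> [] \<and>
          set Xs \<subseteq> Pow (Wf W N V \<Sigma>) \<and> ?tl (?T \<phi>) = \<Inter>(set Xs)"
        by (rule exI[of _ "[?tl (?T \<phi>)]"]) (use \<open>?tl (?T \<phi>) \<subseteq> Wf W N V \<Sigma>\<close> in auto)
    qed (use \<open>c \<in> ?B (?tl (?T \<phi>))\<close> in auto)
    then show "c \<in> box_T_bullet W N V \<Sigma> (?tl (?T \<phi>))"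
      unfolding box_T_bullet_def bullet_op_def sharp_op_def by blast
  qed
next
  have ph: "\<phi> \<in> \<Sigma>" using box_closed[OF assms(5) bp] .
  show "box_T_bullet W N V \<Sigma> (?tl (?T \<phi>)) \<subseteq> ?tl (?T (Box \<phi>))"
  proof
    fix c assume "c \<in> box_T_bullet W N V \<Sigma> (?tl (?T \<phi>))"
    then obtain Y where Y: "Y \<subseteq> ?tl (?T \<phi>)" "c \<in> star_op (Wf W N V \<Sigma>) ?B Y"
      unfolding box_T_bullet_def bullet_op_def sharp_op_def by blast
    then obtain Xs where Xs: "Xs \<noteq> []" "set Xs \<subseteq> Pow (Wf W N V \<Sigma>)" "Y = \<Inter>(set Xs)"
      "\<forall>X\<in>set Xs. c \<in> ?B X"
      unfolding star_op_def by blast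
    have "c \<in> ?B (hd Xs)" using Xs by simp
    then have "c \<in> Wf W N V \<Sigma>" using box_T_sub[OF m] by blast
    then obtain w where w: "w \<in> W" "c = ?cl w" unfolding Wf_def tl_set_def by blast
    have key: "w \<in> N (P X)" if X: "X \<in> set Xs" for X
    proof -
      have "c \<in> box_min W N V \<Sigma> X \<or> c \<in> hat_op (Wf W N V \<Sigma>) (box_min W N V \<Sigma>) X"
        using Xs(4) X unfolding box_T_def by blast
      then show ?thesis
      proof
        assume "c \<in> box_min W N V \<Sigma> X"
        then obtain \<psi> where psi: "Box \<psi> \<in> \<Sigma>" "X = ?tl (?T \<psi>)" "c \<in> ?tl (?T (Box \<psi>))"
          unfolding box_min_def by blast
        have "\<psi> \<in> \<Sigma>" using box_closed[OF assms(5) psi(1)] .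
        then have "P X = ?T \<psi>" using PT psi(2) by simp
        moreover have "w \<in> ?T (Box \<psi>)" using sat[where W=W and N=N and V=V, OF psi(1) w(1)] psi(3) w(2) by simp
        ultimately show ?thesis by simp
      next
        assume h: "c \<in> hat_op (Wf W N V \<Sigma>) (box_min W N V \<Sigma>) X"
        then obtain Z where Z: "X = box_min W N V \<Sigma> Z" "c \<in> X"
          unfolding hat_op_def by (auto split: if_splits)
        then obtain \<chi> where chi: "Box \<chi> \<in> \<Sigma>" "Z = ?tl (?T \<chi>)" "c \<in> ?tl (?T (Box \<chi>))"
          unfolding box_min_def by blast
        have sub1: "?tl (?T (Box \<chi>)) \<subseteq> X" using Z(1) chi(1,2) unfolding box_min_def by blast
        have "?T (Box \<chi>) \<subseteq> P X"
          using sub1 tset_sub[OF m, of "Box \<chi>"] unfolding P_def tl_set_def by blast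
        have wb: "w \<in> ?T (Box \<chi>)" using sat[where W=W and N=N and V=V, OF chi(1) w(1)] chi(3) w(2) by simp
        have "?T (Box \<chi>) \<subseteq> N (?T (Box \<chi>))"
          using assms(2) tset_sub[OF m, of \<chi>] unfolding transitive_nb_def by simp
        also have "\<dots> \<subseteq> N (P X)" using mono[OF \<open>?T (Box \<chi>) \<subseteq> P X\<close> Psub] .
        finally show ?thesis using wb by blast
      qed
    qed
    have "w \<in> N (\<Inter>(set (map P Xs)))"
      using reg_list[OF assms(4), of "map P Xs" w] Xs(1) key Psub by auto
    moreover have "\<Inter>(set (map P Xs)) \<subseteq> ?T \<phi>"
    proof
      fix u assume u: "u \<in> \<Inter>(set (map P Xs))"
      then have "u \<in> W" "?cl u \<in> Y" using Xs(1,3) unfolding P_def by (auto simp: neq_Nil_conv)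
      then have "?cl u \<in> ?tl (?T \<phi>)" using Y(1) by blast
      then show "u \<in> ?T \<phi>" using sat[where W=W and N=N and V=V, OF ph \<open>u \<in> W\<close>] by simp
    qed
    ultimately have "w \<in> N (?T \<phi>)" using mono tset_sub[OF m] by blast
    then show "c \<in> ?tl (?T (Box \<phi>))" using w unfolding tl_set_def by simp
  qed
qed
qed

theorem mainTheorem12:
  fixes W :: "'w set" and N :: "'w set \<Rightarrow> 'w set" and V :: "'v \<Rightarrow> 'w set"
    and \<Sigma> :: "'v fm set"
  assumes "nbhd_model W N V"
    and "transitive_nb W N" and "monotonic_nb W N" and "regular_nb W N"
    and "sub_closed \<Sigma>"
  shows "is_filtration W N V \<Sigma> (box_T_bullet W N V \<Sigma>)"
  unfolding is_filtration_def using part1[OF assms(1)] part2[OF assms] by blast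

end
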